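(* Let $p\ge2$ and $N\ge m$. For almost all $(A,y)\in\mathbb R^{m\times N}\times\mathbb R^m$ (with respect to Lebesgue measure), the unique optimal solution $x^*$ of $\min_{x\in\mathbb R^N}\|x\|_p$ subject to $Ax=y$ satisfies $|\mathrm{supp}(x^* )|=N$.
   Context: $\|x\|_p:=(\sum_i|x_i|^p)^{1/p}$; $\mathrm{supp}(x)=\{i:x_i\ne0\}$. "For almost all" means outside a set of Lebesgue measure zero. *)

theory Defs
  imports "HOL-Analysis.Analysis"
begin

definition lp_norm :: "real \<Rightarrow> real ^ 'n \<Rightarrow> real" where
  "lp_norm p x = (\<Sum>i\<in>UNIV. \<bar>x $ i\<bar> powr p) powr (1 / p)"

definition supp :: "real ^ 'n \<Rightarrow> 'n set" where
  "supp x = {i. x $ i \<noteq> 0}"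

definition lp_optimal :: "real \<Rightarrow> real ^ 'n ^ 'm \<Rightarrow> real ^ 'm \<Rightarrow> real ^ 'n \<Rightarrow> bool" where
  "lp_optimal p A y x \<longleftrightarrow> A *v x = y \<and> (\<forall>z. A *v z = y \<longrightarrow> lp_norm p x \<le> lp_norm p z)"

end

theory Submission
  imports Defs
begin

definition psi :: "real \<Rightarrow> real \<Rightarrow> real" where "psi p t = sgn t * \<bar>t\<bar> powr (p - 1)"

lemma psi_pos: "t > 0 \<Longrightarrow> psi p t = t powr (p-1)" by (simp add: psi_def)
lemma psi_neg: "t < 0 \<Longrightarrow> psi p t = - ((-t) powr (p-1))" by (simp add: psi_def)
lemma psi_zero[simp]: "psi p 0 = 0" by (simp add: psi_def)

lemma psi_mono:
  assumes "p > 1" "s < t" shows "psi p s < psi p t"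
proof -
  consider "0 \<le> s" | "s < 0 \<and> t \<le> 0" | "s < 0 \<and> 0 < t" using assms by linarith
  then show ?thesis
  proof cases
    case 1
    then show ?thesis using assms
      by (cases "s = 0") (auto simp: psi_def powr_less_mono2)
  next
    case 2
    then show ?thesis using assms
      by (cases "t = 0") (auto simp: psi_def powr_less_mono2)
  next
    case 3
    have "0 < (-s) powr (p-1)" "0 < t powr (p-1)" using 3 by auto
    moreover have "psi p s = -((-s) powr (p-1))" "psi p t = t powr (p-1)" using 3 psi_neg psi_pos by auto
    ultimately show ?thesis by linarith
  qed
qed

lemma psi_eq0: "p > 1 \<Longrightarrow> psi p t = 0 \<longleftrightarrow> t = 0"
  by (simp add: psi_def sgn_if)

lemma phi_deriv:
  assumes "p > 1"
  shows "((\<lambda>t. \<bar>t\<bar> powr p) has_real_derivative p * psi p t) (at t)"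
proof -
  consider "t > 0" | "t < 0" | "t = 0" by linarith
  then show ?thesis
  proof cases
    case 1
    have "((\<lambda>t. t powr p) has_real_derivative p * t powr (p - 1)) (at t)"
      using 1 by (rule has_real_derivative_powr)
    then have "((\<lambda>t. t powr p) has_real_derivative p * psi p t) (at t)" using 1 by (simp add: psi_pos)
    then show ?thesis
      apply (rule has_field_derivative_transform_within_open[where S="{0<..}"])
      using 1 by auto
  next
    case 2
    have "((\<lambda>t. (-t) powr p) has_real_derivative (p * (-t) powr (p - 1)) * (-1)) (at t)"
      using 2 by (auto intro!: derivative_eq_intros)
    then have "((\<lambda>t. (-t) powr p) has_real_derivative p * psi p t) (at t)" using 2 by (simp add: psi_neg)
    then show ?thesis
      apply (rule has_field_derivative_transform_within_open[where S="{..<0}"])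
      using 2 by auto
  next
    case 3
    have "((\<lambda>y. (\<bar>y\<bar> powr p - \<bar>0\<bar> powr p) / (y - 0)) \<longlongrightarrow> 0) (at 0)"
    proof (rule tendsto_norm_zero_cancel)
      have "((\<lambda>y. \<bar>y\<bar> powr (p-1)) \<longlongrightarrow> 0 powr (p-1)) (at 0)"
        using assms by (auto intro!: tendsto_intros tendsto_eq_intros)
      moreover have "\<forall>\<^sub>F y in at 0. \<bar>y\<bar> powr (p-1) = norm ((\<bar>y\<bar> powr p - \<bar>0\<bar> powr p) / (y - 0))"
        unfolding eventually_at_filter
        by (auto simp: abs_divide powr_diff)
      ultimately show "((\<lambda>y. norm ((\<bar>y\<bar> powr p - \<bar>0\<bar> powr p) / (y - 0))) \<longlongrightarrow> 0) (at 0)"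
        using assms by (auto dest: Lim_transform_eventually)
    qed
    then show ?thesis using 3 by (simp add: has_field_derivative_iff)
  qed
qed

lemma psi_differentiable:
  assumes "p \<ge> 2"
  shows "\<exists>D. (psi p has_real_derivative D) (at t)"
proof -
  consider "t > 0" | "t < 0" | "t = 0" by linarith
  then show ?thesis
  proof cases
    case 1
    have "((\<lambda>t. t powr (p-1)) has_real_derivative (p-1) * t powr (p - 1 - 1)) (at t)"
      using 1 by (rule has_real_derivative_powr)
    then have "(psi p has_real_derivative (p-1) * t powr (p - 1 - 1)) (at t)"
      apply (rule has_field_derivative_transform_within_open[where S="{0<..}"])
      using 1 by (auto simp: psi_pos)
    then show ?thesis by blast
  next
    case 2
    have "((\<lambda>t. - ((-t) powr (p-1))) has_real_derivative - (((p-1) * (-t) powr (p - 1 - 1)) * (-1))) (at t)"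
      using 2 by (auto intro!: derivative_eq_intros)
    then have "(psi p has_real_derivative - (((p-1) * (-t) powr (p - 1 - 1)) * (-1))) (at t)"
      apply (rule has_field_derivative_transform_within_open[where S="{..<0}"])
      using 2 by (auto simp: psi_neg)
    then show ?thesis by blast
  next
    case 3
    have eq: "\<forall>\<^sub>F y in at 0. \<bar>y\<bar> powr (p-2) = (psi p y - psi p 0) / (y - 0)"
      unfolding eventually_at_filter
      by (auto simp: psi_def powr_diff sgn_if power2_eq_square)
    show ?thesis
    proof (cases "p = 2")
      case True
      have "((\<lambda>y. \<bar>y\<bar> powr (p-2)) \<longlongrightarrow> 1) (at 0)"
        apply (rule tendsto_eventually)
        unfolding eventually_at_filter using True by auto
      then have "((\<lambda>y. (psi p y - psi p 0) / (y - 0)) \<longlongrightarrow> 1) (at 0)"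
        using eq by (rule Lim_transform_eventually)
      then show ?thesis using 3 by (auto simp: has_field_derivative_iff)
    next
      case False
      have "((\<lambda>y. \<bar>y\<bar> powr (p-2)) \<longlongrightarrow> 0 powr (p-2)) (at 0)"
        using assms False by (auto intro!: tendsto_intros tendsto_eq_intros)
      then have "((\<lambda>y. \<bar>y\<bar> powr (p-2)) \<longlongrightarrow> 0) (at 0)" by simp
      then have "((\<lambda>y. (psi p y - psi p 0) / (y - 0)) \<longlongrightarrow> 0) (at 0)"
        using eq by (rule Lim_transform_eventually)
      then show ?thesis using 3 by (auto simp: has_field_derivative_iff)
    qed
  qed
qed

lemma range_transpose:
  fixes M :: "real^'a^'b" and w :: "real^'a"
  assumes "\<And>v. M *v v = 0 \<Longrightarrow> w \<bullet> v = 0"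
  shows "\<exists>l. transpose M *v l = w"
proof -
  let ?U = "range (\<lambda>l. transpose M *v l)"
  have sub: "subspace ?U"
    by (intro subspace_UNIV linear_subspace_image matrix_vector_mul_linear)
  obtain u z where u: "u \<in> span ?U" and z: "\<And>q. q \<in> span ?U \<Longrightarrow> orthogonal z q" and wz: "w = u + z"
    by (rule orthogonal_subspace_decomp_exists[of ?U w]) auto
  have "(transpose M *v (M *v z)) \<bullet> z = 0"
    using z[of "transpose M *v (M *v z)"] by (auto simp: span_base orthogonal_def inner_commute)
  then have "(M *v z) \<bullet> (M *v z) = 0" by (simp add: dot_lmul_matrix)
  then have "M *v z = 0" by simp
  then have "w \<bullet> z = 0" by (rule assms)
  moreover have "u \<bullet> z = 0" using z[OF u] by (simp add: orthogonal_def inner_commute)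
  ultimately have "z \<bullet> z = 0" using wz by (simp add: inner_add_left)
  then have "z = 0" by simp
  then have "w \<in> ?U" using u wz sub by (metis span_eq_iff add_0_right)
  then show ?thesis by auto
qed

definition Fval :: "real \<Rightarrow> real^'n \<Rightarrow> real" where
  "Fval p x = (\<Sum>i\<in>UNIV. \<bar>x $ i\<bar> powr p)"

definition Psi :: "real \<Rightarrow> real^'n \<Rightarrow> real^'n" where
  "Psi p x = (\<chi> i. psi p (x $ i))"

lemma Fval_nonneg: "Fval p x \<ge> 0" by (simp add: Fval_def sum_nonneg)

lemma lp_norm_le_iff:
  assumes "p > 0"
  shows "lp_norm p x \<le> lp_norm p z \<longleftrightarrow> Fval p x \<le> Fval p z"
proof
  assume "Fval p x \<le> Fval p z"
  then show "lp_norm p x \<le> lp_norm p z"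
    unfolding lp_norm_def Fval_def[symmetric] using assms
    by (intro powr_mono2) (auto simp: Fval_nonneg)
next
  assume h: "lp_norm p x \<le> lp_norm p z"
  show "Fval p x \<le> Fval p z"
  proof (rule ccontr)
    assume "\<not> ?thesis"
    then have "Fval p z powr (1/p) < Fval p x powr (1/p)"
      using assms by (intro powr_less_mono2) (auto simp: Fval_nonneg)
    then show False using h unfolding lp_norm_def Fval_def by simp
  qed
qed

lemma Fval_deriv:
  assumes "p > 1"
  shows "((\<lambda>s. Fval p (x + s *\<^sub>R w)) has_real_derivative p * (Psi p x \<bullet> w)) (at 0)"
proof -
  have "((\<lambda>s. \<Sum>i\<in>UNIV. \<bar>x $ i + s * w $ i\<bar> powr p) has_real_derivative
        (\<Sum>i\<in>UNIV. p * psi p (x $ i + 0 * w $ i) * w $ i)) (at 0)"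
  proof (rule DERIV_sum)
    fix i
    have "((\<lambda>s. x $ i + s * w $ i) has_real_derivative w $ i) (at 0)"
      by (auto intro!: derivative_eq_intros)
    then show "((\<lambda>s. \<bar>x $ i + s * w $ i\<bar> powr p) has_real_derivative p * psi p (x $ i + 0 * w $ i) * w $ i) (at 0)"
      using DERIV_chain2[OF phi_deriv[OF assms]] by blast
  qed
  then show ?thesis
    by (simp add: Fval_def Psi_def inner_vec_def sum_distrib_left mult.assoc)
qed

lemma FOC:
  assumes "p > 1" "lp_optimal p A y x" "A *v w = 0"
  shows "Psi p x \<bullet> w = 0"
proof -
  have "p * (Psi p x \<bullet> w) = 0"
  proof (rule DERIV_local_min[OF Fval_deriv[OF assms(1)], of 1])
    show "\<forall>s. \<bar>0 - s\<bar> < 1 \<longrightarrow> Fval p (x + 0 *\<^sub>R w) \<le> Fval p (x + s *\<^sub>R w)"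
    proof (intro allI impI)
      fix s :: real
      have "A *v (x + s *\<^sub>R w) = y" using assms
        by (simp add: lp_optimal_def matrix_vector_right_distrib matrix_vector_mult_scaleR)
      then have "lp_norm p x \<le> lp_norm p (x + s *\<^sub>R w)" using assms(2) by (simp add: lp_optimal_def)
      then show "Fval p (x + 0 *\<^sub>R w) \<le> Fval p (x + s *\<^sub>R w)"
        using assms(1) lp_norm_le_iff[of p x "x + s *\<^sub>R w"] by simp
    qed
  qed simp
  then show ?thesis using assms(1) by simp
qed

lemma uniq:
  assumes "p > 1" "lp_optimal p A y x" "lp_optimal p A y z"
  shows "x = z"
proof -
  have Aw: "A *v (x - z) = 0" using assms by (simp add: lp_optimal_def matrix_vector_mult_diff_distrib)
  have "Psi p x \<bullet> (x - z) = 0" "Psi p z \<bullet> (x - z) = 0"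
    using FOC[OF assms(1,2) Aw] FOC[OF assms(1,3) Aw] by auto
  then have "(\<Sum>i\<in>UNIV. (psi p (x$i) - psi p (z$i)) * (x$i - z$i)) = 0"
    by (simp add: Psi_def inner_vec_def left_diff_distrib sum_subtractf)
  moreover have nn: "\<forall>i\<in>UNIV. 0 \<le> (psi p (x$i) - psi p (z$i)) * (x$i - z$i)"
  proof
    fix i
    consider "x$i < z$i" | "x$i = z$i" | "x$i > z$i" by linarith
    then show "0 \<le> (psi p (x$i) - psi p (z$i)) * (x$i - z$i)"
      by cases (use psi_mono[OF assms(1), of "x$i" "z$i"] psi_mono[OF assms(1), of "z$i" "x$i"] in \<open>auto intro: mult_nonpos_nonpos\<close>)
  qed
  ultimately have "\<forall>i\<in>UNIV. (psi p (x$i) - psi p (z$i)) * (x$i - z$i) = 0"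
    using nn by (subst (asm) sum_nonneg_eq_0_iff) auto
  have "x$i = z$i" for i
  proof (rule ccontr)
    assume ne: "x$i \<noteq> z$i"
    then have "psi p (x$i) \<noteq> psi p (z$i)"
      using psi_mono[OF assms(1), of "x$i" "z$i"] psi_mono[OF assms(1), of "z$i" "x$i"]
      by (cases "x$i < z$i") auto
    then show False using ne \<open>\<forall>i\<in>UNIV. _ = 0\<close> by auto
  qed
  then show ?thesis by (simp add: vec_eq_iff)
qed

lemma Fval_cont: "p > 1 \<Longrightarrow> continuous_on S (Fval p)"
  unfolding Fval_def
  by (intro continuous_on_sum continuous_on_compose2[OF continuous_at_imp_continuous_on[OF ballI[OF DERIV_isCont[OF phi_deriv]]]])
     (auto intro!: continuous_intros)

lemma exists_opt:
  fixes A :: "real^'n^'m"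
  assumes p: "p > 1" and x0: "A *v x0 = y"
  shows "\<exists>x. lp_optimal p A y x"
proof -
  define C where "C = Fval p x0"
  define K where "K = {z. A *v z = y} \<inter> {z. Fval p z \<le> C}"
  have cl: "closed K" unfolding K_def
    by (intro closed_Int closed_Collect_eq closed_Collect_le Fval_cont p)
       (auto intro: continuous_intros linear_continuous_on matrix_vector_mul_linear_gen)
  have bd: "bounded K"
    unfolding bounded_iff
  proof (intro exI ballI)
    fix z assume "z \<in> K"
    then have zC: "Fval p z \<le> C" by (simp add: K_def)
    have "\<bar>z $ i\<bar> \<le> C powr (1/p)" for i
    proof -
      have "\<bar>z $ i\<bar> powr p \<le> Fval p z" unfolding Fval_def
        by (rule member_le_sum) auto
      then have "\<bar>z $ i\<bar> powr p \<le> C" using zC by linarith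
      then have "(\<bar>z $ i\<bar> powr p) powr (1/p) \<le> C powr (1/p)"
        using p by (intro powr_mono2) auto
      then show ?thesis using p by (simp add: powr_powr)
    qed
    then have "(\<Sum>i\<in>UNIV. \<bar>z$i\<bar>) \<le> (\<Sum>i\<in>(UNIV::'n set). C powr (1/p))"
      by (intro sum_mono) auto
    then show "norm z \<le> real CARD('n) * C powr (1/p)"
      using norm_le_l1_cart[of z] by simp
  qed
  have ne: "K \<noteq> {}" using x0 by (auto simp: K_def C_def)
  obtain x where xK: "x \<in> K" and xmin: "\<And>z. z \<in> K \<Longrightarrow> Fval p x \<le> Fval p z"
    using continuous_attains_inf[OF compact_eq_bounded_closed[THEN iffD2, OF conjI[OF bd cl]] ne Fval_cont[OF p]]
    by blast
  have "lp_optimal p A y x"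
    unfolding lp_optimal_def
  proof (intro conjI allI impI)
    show "A *v x = y" using xK by (simp add: K_def)
    fix z assume "A *v z = y"
    then have "Fval p x \<le> Fval p z"
      using xmin[of z] xK by (cases "Fval p z \<le> C") (auto simp: K_def)
    then show "lp_norm p x \<le> lp_norm p z" using lp_norm_le_iff[of p x z] p by simp
  qed
  then show ?thesis by blast
qed

lemma bl_axis: "bounded_linear (axis i :: 'a::euclidean_space \<Rightarrow> 'a^'k)"
proof -
  have "linear (axis i :: 'a::euclidean_space \<Rightarrow> 'a^'k)"
    by (rule linearI) (auto simp: axis_def vec_eq_iff)
  then show ?thesis by (simp add: linear_conv_bounded_linear)
qed

lemma diff_vec_lambda:
  fixes f :: "'b::real_normed_vector \<Rightarrow> 'k::finite \<Rightarrow> 'a::euclidean_space"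
  assumes "\<And>i. (\<lambda>x. f x i) differentiable (at y within S)"
  shows "(\<lambda>x. vec_lambda (f x)) differentiable (at y within S)"
proof -
  have comp: "(\<Sum>i\<in>UNIV. axis i (f x i)) $ j = f x j" for x j
  proof -
    have "(\<Sum>i\<in>UNIV. axis i (f x i)) $ j = (\<Sum>i\<in>UNIV. if i = j then f x i else 0)"
      by (simp add: sum_component axis_def)
    then show ?thesis by simp
  qed
  have eq: "(\<lambda>x. vec_lambda (f x)) = (\<lambda>x. \<Sum>i\<in>UNIV. axis i (f x i))"
    using comp by (intro ext) (simp add: vec_eq_iff)
  have d: "(\<lambda>x. axis i (f x i)) differentiable (at y within S)" for i
    using differentiable_compose[OF bounded_linear_imp_differentiable[OF bl_axis[of i]] assms[of i]]
    by (simp add: o_def)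
  show ?thesis unfolding eq
    by (rule differentiable_sum) (auto intro: d)
qed

lemma diff_fst_coord: "(\<lambda>z::(real^'n^'m) \<times> 'b::real_normed_vector. fst z $ i $ l) differentiable F"
  by (rule bounded_linear_imp_differentiable)
     (intro bounded_linear_compose[OF bounded_linear_vec_nth] bounded_linear_fst)

lemma diff_snd_coord: "(\<lambda>z::'b::real_normed_vector \<times> (real^'m). snd z $ i) differentiable F"
  by (rule bounded_linear_imp_differentiable)
     (intro bounded_linear_compose[OF bounded_linear_vec_nth] bounded_linear_snd)

lemma psi_diff_comp:
  assumes "p \<ge> 2" "f differentiable (at x)"
  shows "(\<lambda>z. psi p (f z)) differentiable (at x)"
proof -
  obtain D where "(psi p has_real_derivative D) (at (f x))" using psi_differentiable[OF assms(1)] by blast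
  then have "psi p differentiable (at (f x))"
    using has_field_derivative_imp_has_derivative differentiable_def by blast
  then show ?thesis using differentiable_chain_at[OF assms(2)] by (simp add: o_def)
qed

definition a1 :: "real \<Rightarrow> 'm \<Rightarrow> (real^'n^'m) \<times> (real^'m) \<Rightarrow> 'm \<Rightarrow> 'n \<Rightarrow> real" where
  "a1 p k z i l = (if i = k then (psi p (fst z $ k $ l) - (\<Sum>i'\<in>UNIV-{k}. snd z $ i' * fst z $ i' $ l)) / snd z $ k
                  else fst z $ i $ l)"

definition F1 :: "real \<Rightarrow> 'm \<Rightarrow> (real^'n^'m) \<times> (real^'m) \<Rightarrow> (real^'n^'m) \<times> (real^'m)" where
  "F1 p k z = ((\<chi> i. \<chi> l. a1 p k z i l), (\<chi> i. \<Sum>l\<in>UNIV. a1 p k z i l * fst z $ k $ l))"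

definition a2 :: "'m \<Rightarrow> ('m \<Rightarrow> 'n) \<Rightarrow> (real^'n^'m) \<times> (real^'m) \<Rightarrow> 'm \<Rightarrow> 'n \<Rightarrow> real" where
  "a2 k g z i l = (if i = k then - (\<Sum>i'\<in>UNIV-{k}. fst z $ k $ (g i') * fst z $ i' $ l) else fst z $ i $ l)"

definition F2 :: "'m \<Rightarrow> ('m \<Rightarrow> 'n) \<Rightarrow> (real^'n^'m) \<times> (real^'m) \<Rightarrow> (real^'n^'m) \<times> (real^'m)" where
  "F2 k g z = ((\<chi> i. \<chi> l. a2 k g z i l), snd z)"

lemma a1_diff:
  assumes "p \<ge> 2" "snd z $ k \<noteq> 0"
  shows "(\<lambda>z. a1 p k z i l) differentiable (at z)"
proof (cases "i = k")
  case True
  then show ?thesis unfolding a1_def using assms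
    by (auto intro!: derivative_intros psi_diff_comp diff_fst_coord diff_snd_coord)
next
  case False
  then show ?thesis unfolding a1_def by (simp add: diff_fst_coord)
qed

lemma F1_diff:
  assumes "p \<ge> 2" "snd z $ k \<noteq> 0"
  shows "F1 p k differentiable (at z)"
  unfolding F1_def
  by (intro differentiable_Pair diff_vec_lambda differentiable_sum differentiable_mult a1_diff assms diff_fst_coord ballI) simp

lemma a2_diff: "(\<lambda>z. a2 k g z i l) differentiable (at z)"
proof (cases "i = k")
  case True
  then show ?thesis unfolding a2_def
    by (auto intro!: derivative_intros diff_fst_coord)
next
  case False
  then show ?thesis unfolding a2_def by (simp add: diff_fst_coord)
qed

lemma F2_diff: "F2 k g differentiable (at z)"
  unfolding F2_def
  by (intro differentiable_Pair diff_vec_lambda bounded_linear_imp_differentiable[OF bounded_linear_snd] a2_diff)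

lemma ite_mult: "(if P then 1 else 0) * (x::real) = (if P then x else 0)" by simp

lemma negl_fst: "negligible {z::(real^'n^'m) \<times> (real^'m). fst z $ k $ j = 0}"
proof -
  define c :: "(real^'n^'m) \<times> (real^'m)" where "c = ((\<chi> i. \<chi> l. if i = k \<and> l = j then 1 else 0), 0)"
  have "c \<bullet> z = fst z $ k $ j" for z
  proof -
    have "c \<bullet> z = (\<Sum>i\<in>UNIV. \<Sum>l\<in>UNIV. (if i = k \<and> l = j then 1 else 0) * fst z $ i $ l)"
      by (cases z) (simp add: c_def inner_vec_def)
    also have "\<dots> = (\<Sum>i\<in>UNIV. if i = k then fst z $ i $ j else 0)"
      by (intro sum.cong refl) (auto simp: ite_mult)
    finally show ?thesis by simp
  qed
  moreover have "c \<noteq> 0"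
  proof
    assume "c = 0"
    then have "fst c $ k $ j = 0" by simp
    then show False by (simp add: c_def)
  qed
  ultimately show ?thesis using negligible_hyperplane[of c 0] by simp
qed

lemma negl_snd: "negligible {z::(real^'n^'m) \<times> (real^'m). snd z $ k = 0}"
proof -
  define c :: "(real^'n^'m) \<times> (real^'m)" where "c = (0, (\<chi> i. if i = k then 1 else 0))"
  have "c \<bullet> z = snd z $ k" for z
    by (cases z) (simp add: c_def inner_vec_def ite_mult)
  moreover have "c \<noteq> 0"
  proof
    assume "c = 0"
    then have "snd c $ k = 0" by simp
    then show False by (simp add: c_def)
  qed
  ultimately show ?thesis using negligible_hyperplane[of c 0] by simp
qed

lemma transpose_comp: "(transpose (A::real^'n^'m) *v l) $ m = (\<Sum>i\<in>UNIV. A $ i $ m * l $ i)"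
  by (simp add: vector_matrix_mult_def mult.commute)

lemma F1_witness:
  fixes A :: "real^'n^'m"
  assumes "transpose A *v l = Psi p x" "l $ k \<noteq> 0" "x $ j = 0"
  shows "(A, A *v x) \<in> F1 p k ` {z. fst z $ k $ j = 0 \<and> snd z $ k \<noteq> 0}"
proof
  define B where "B = (\<chi> i. if i = k then x else A $ i)"
  show "(B, l) \<in> {z. fst z $ k $ j = 0 \<and> snd z $ k \<noteq> 0}" using assms by (simp add: B_def)
  have a: "a1 p k (B, l) i m = A $ i $ m" for i m
  proof (cases "i = k")
    case True
    have "psi p (x $ m) = (\<Sum>i\<in>UNIV. A $ i $ m * l $ i)"
      using arg_cong[OF assms(1), of "\<lambda>v. v $ m"] by (simp only: transpose_comp) (simp add: Psi_def)
    also have "\<dots> = A $ k $ m * l $ k + (\<Sum>i\<in>UNIV-{k}. A $ i $ m * l $ i)"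
      by (rule sum.remove) auto
    finally have "psi p (x $ m) - (\<Sum>i\<in>UNIV-{k}. l $ i * B $ i $ m) = A $ k $ m * l $ k"
      by (simp add: B_def mult.commute)
    then show ?thesis using True assms(2) by (simp add: a1_def B_def)
  next
    case False
    then show ?thesis by (simp add: a1_def B_def)
  qed
  have Bk: "B $ k = x" by (simp add: B_def)
  show "(A, A *v x) = F1 p k (B, l)"
    by (simp add: F1_def a vec_eq_iff matrix_vector_mult_def Bk)
qed

lemma F2_witness:
  fixes A :: "real^'n^'m" and g :: "'m \<Rightarrow> 'n"
  assumes "transpose A *v l = 0" "l $ k \<noteq> 0" "inj g"
  shows "(A, y) \<in> F2 k g ` {z. fst z $ k $ (g k) = 0}"
proof
  define B where "B = (\<chi> i. if i = k then (\<chi> m. if m \<in> g ` (UNIV - {k}) then l $ (inv g m) / l $ k else 0) else A $ i)"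
  have gk: "g k \<notin> g ` (UNIV - {k})" using assms(3) by (auto simp: inj_def)
  show "(B, y) \<in> {z. fst z $ k $ (g k) = 0}" using gk by (simp add: B_def)
  have Bk: "B $ k $ (g i) = l $ i / l $ k" if "i \<noteq> k" for i
    using that assms(3) by (simp add: B_def)
  have a: "a2 k g (B, y) i m = A $ i $ m" for i m
  proof (cases "i = k")
    case True
    have "0 = (\<Sum>i\<in>UNIV. A $ i $ m * l $ i)"
      using arg_cong[OF assms(1), of "\<lambda>v. v $ m"] by (simp only: transpose_comp) simp
    also have "\<dots> = A $ k $ m * l $ k + (\<Sum>i\<in>UNIV-{k}. A $ i $ m * l $ i)"
      by (rule sum.remove) auto
    finally have e: "A $ k $ m = - (\<Sum>i\<in>UNIV-{k}. A $ i $ m * l $ i) / l $ k"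
      using assms(2) by (simp add: field_simps)
    have "(\<Sum>i'\<in>UNIV-{k}. B $ k $ (g i') * B $ i' $ m) = (\<Sum>i\<in>UNIV-{k}. A $ i $ m * l $ i) / l $ k"
      unfolding sum_divide_distrib
      by (intro sum.cong refl) (auto simp: Bk, simp add: B_def)
    then show ?thesis using True e by (simp add: a2_def)
  next
    case False
    then show ?thesis by (simp add: a2_def B_def)
  qed
  show "(A, y) = F2 k g (B, y)"
    by (simp add: F2_def a vec_eq_iff)
qed

theorem proposition4p1:
  fixes p :: real
  assumes "p \<ge> 2"
    and "CARD('m::finite) \<le> CARD('n::finite)"
  shows "AE Ay in (lborel :: ((real ^ 'n ^ 'm) \<times> (real ^ 'm)) measure).
           (\<exists>!x. lp_optimal p (fst Ay) (snd Ay) x) \<and>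
           (\<forall>x. lp_optimal p (fst Ay) (snd Ay) x \<longrightarrow> card (supp x) = CARD('n))"
proof -
  have p2: "p \<ge> 2" using assms(1) .
  then have p1: "p > 1" by simp
  obtain g :: "'m \<Rightarrow> 'n" where g: "inj g"
    using card_le_inj[of "UNIV::'m set" "UNIV::'n set"] assms(2) by auto
  define k0 :: 'm where "k0 = undefined"
  define Bad :: "((real ^ 'n ^ 'm) \<times> (real ^ 'm)) set" where
    "Bad = {z. snd z $ k0 = 0} \<union> (\<Union>k. F2 k g ` {z. fst z $ k $ g k = 0})
       \<union> (\<Union>j. \<Union>k. F1 p k ` {z. fst z $ k $ j = 0 \<and> snd z $ k \<noteq> 0})"
  have negBad: "negligible Bad"
  proof -
    have n2: "negligible (F2 k g ` {z. fst z $ k $ g k = 0})" for k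
      by (rule negligible_differentiable_image_negligible[OF order_refl negl_fst])
         (auto intro: differentiable_at_withinI F2_diff simp: differentiable_on_def)
    have n1: "negligible (F1 p k ` {z. fst z $ k $ j = 0 \<and> snd z $ k \<noteq> 0})" for k j
      by (rule negligible_differentiable_image_negligible[OF order_refl negligible_subset[OF negl_fst]])
         (auto intro!: differentiable_at_withinI F1_diff[OF p2] simp: differentiable_on_def)
    show ?thesis unfolding Bad_def
      by (intro negligible_Un negl_snd negligible_Union) (auto intro: n1 n2)
  qed
  have good: "(\<exists>!x. lp_optimal p A y x) \<and> (\<forall>x. lp_optimal p A y x \<longrightarrow> card (supp x) = CARD('n))"
    if nb: "(A, y) \<notin> Bad" for A y
  proof -
    have y0: "y $ k0 \<noteq> 0" using nb by (auto simp: Bad_def)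
    have injT: "l = 0" if "transpose A *v l = 0" for l
    proof (rule ccontr)
      assume "l \<noteq> 0"
      then obtain k where "l $ k \<noteq> 0" by (auto simp: vec_eq_iff)
      from F2_witness[OF that this g, of y] nb show False by (auto simp: Bad_def)
    qed
    have "\<exists>l0. transpose (transpose A) *v l0 = y"
      by (rule range_transpose) (use injT in force)
    then obtain l0 where "A *v l0 = y" by auto
    then obtain x0 where x0: "lp_optimal p A y x0" using exists_opt[OF p1] by blast
    have ex1: "\<exists>!x. lp_optimal p A y x" using x0 uniq[OF p1] by blast
    have "card (supp x) = CARD('n)" if opt: "lp_optimal p A y x" for x
    proof -
      have "x $ j \<noteq> 0" for j
      proof
        assume xj: "x $ j = 0"
        obtain l where l: "transpose A *v l = Psi p x"
          using range_transpose[of A "Psi p x"] FOC[OF p1 opt] by blast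
        have Ax: "A *v x = y" using opt by (simp add: lp_optimal_def)
        show False
        proof (cases "l = 0")
          case True
          then have "Psi p x = 0" using l by simp
          then have "x = 0" using psi_eq0[OF p1] by (simp add: Psi_def vec_eq_iff)
          then show False using Ax y0 by simp
        next
          case False
          then obtain k where "l $ k \<noteq> 0" by (auto simp: vec_eq_iff)
          from F1_witness[OF l this xj] nb Ax show False by (auto simp: Bad_def)
        qed
      qed
      then have "supp x = UNIV" by (auto simp: supp_def)
      then show ?thesis by simp
    qed
    with ex1 show ?thesis by blast
  qed
  have "AE z in (lebesgue :: ((real ^ 'n ^ 'm) \<times> (real ^ 'm)) measure). (\<exists>!x. lp_optimal p (fst z) (snd z) x) \<and>
           (\<forall>x. lp_optimal p (fst z) (snd z) x \<longrightarrow> card (supp x) = CARD('n))"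
  proof -
    have "{z :: (real ^ 'n ^ 'm) \<times> (real ^ 'm). \<not> ((\<exists>!x. lp_optimal p (fst z) (snd z) x) \<and>
           (\<forall>x. lp_optimal p (fst z) (snd z) x \<longrightarrow> card (supp x) = CARD('n)))} \<subseteq> Bad"
    proof
      fix z :: "(real ^ 'n ^ 'm) \<times> (real ^ 'm)" assume z: "z \<in> {z. \<not> ((\<exists>!x. lp_optimal p (fst z) (snd z) x) \<and>
           (\<forall>x. lp_optimal p (fst z) (snd z) x \<longrightarrow> card (supp x) = CARD('n)))}"
      show "z \<in> Bad"
      proof (rule ccontr)
        assume "z \<notin> Bad"
        then have "(fst z, snd z) \<notin> Bad" by simp
        from good[OF this] z show False by blast
      qed
    qed
    then show ?thesis using negBad
      by (intro eventually_ae_filter_negligible[THEN iffD2] exI[where x=Bad] conjI)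
  qed
  then show ?thesis by (rule AE_completion_iff[THEN iffD1])
qed

end
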